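(* Let $p\in]1,+\infty[$. Consider the implicit scheme $\frac{\mathbf u^k-\mathbf u^{k-1}}{\tau_{k-1}}=-\Delta_p^{\mathbf K}\mathbf u^k+\mathbf f^k$, $k\in[N]$, $\mathbf u^0=\mathbf g$, with kernel $\mathbf K$, data $(\mathbf f^k)_k,\mathbf g$ and step sizes $\tau_{k-1}>0$. Assume $I_n\mathbf K$ is nonnegative, measurable, symmetric with $\sup_x\int_\Omega I_n\mathbf K(x,y)dy<\infty$; that $I_n\mathbf g\in L^{\max(p,q)}(\Omega)$ for some $q\in[1,+\infty]$ with $\sup_n\|I_n\mathbf g\|_{L^q(\Omega)}<+\infty$; and that $\bar f_n\in L^1([0,T];L^{\max(p,q)}(\Omega))$ with $\sup_n\|\bar f_n\|_{L^1([0,T];L^q(\Omega))}<+\infty$. Then $\bar u_n(\cdot,t)\in L^{\max(p,q)}(\Omega)$ for all $t\in[0,T]$ and $\sup_{t\in[0,T],n\in\mathbb N}\|\bar u_n(\cdot,t)\|_{L^q(\Omega)}<+\infty$.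
   Context: $d\ge1$, $\Omega=[0,1]^d$, hypercubic cells $\Omega^n_{\mathbf i}$ of measures $h_{\mathbf i}$, $I_n$ the piecewise-constant injector on cells (resp. products of cells). $\Psi(s)=|s|^{p-2}s$; $(\Delta_p^{\mathbf K}\mathbf u)_{\mathbf i}=-\sum_{\mathbf j}h_{\mathbf j}\mathbf K_{\mathbf i\mathbf j}\Psi(\mathbf u_{\mathbf j}-\mathbf u_{\mathbf i})$. Time partition $0=t_0<\dots<t_N=T$, $\tau_{k-1}=t_k-t_{k-1}$. With $u_n^k=I_n\mathbf u^k$, $f_n^k=I_n\mathbf f^k$: $\bar u_n(x,t)=u_n^k(x)$ and $\bar f_n(x,t)=f_n^k(x)$ for $t\in]t_{k-1},t_k]$. *)

theory Defs
  imports "HOL-Analysis.Analysis" "HOL-Probability.Essential_Supremum"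
begin

definition Omega :: "(real^'d) set" where
  "Omega = cbox 0 One"

definition Psi :: "real \<Rightarrow> real \<Rightarrow> real" where
  "Psi p s = \<bar>s\<bar> powr (p - 2) * s"

text \<open>A hypercubic cell (open/closed/half-open faces allowed).\<close>
definition hypercubic :: "(real^'d) set \<Rightarrow> bool" where
  "hypercubic C \<longleftrightarrow> (\<exists>a r. r > 0 \<and> box a (a + r *\<^sub>R One) \<subseteq> C \<and> C \<subseteq> cbox a (a + r *\<^sub>R One))"

definition cell_partition :: "(nat \<Rightarrow> 'c set) \<Rightarrow> (nat \<Rightarrow> 'c \<Rightarrow> (real^'d) set) \<Rightarrow> bool" where
  "cell_partition J cell \<longleftrightarrow> (\<forall>n. finite (J n) \<and> (\<forall>i\<in>J n. hypercubic (cell n i))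
      \<and> (\<forall>i\<in>J n. \<forall>j\<in>J n. i \<noteq> j \<longrightarrow> cell n i \<inter> cell n j = {})
      \<and> (\<Union>i\<in>J n. cell n i) = Omega)"

definition hmeas :: "(nat \<Rightarrow> 'c \<Rightarrow> (real^'d) set) \<Rightarrow> nat \<Rightarrow> 'c \<Rightarrow> real" where
  "hmeas cell n i = measure lebesgue (cell n i)"

definition In :: "(nat \<Rightarrow> 'c set) \<Rightarrow> (nat \<Rightarrow> 'c \<Rightarrow> (real^'d) set) \<Rightarrow> nat \<Rightarrow> ('c \<Rightarrow> real) \<Rightarrow> real^'d \<Rightarrow> real" where
  "In J cell n v x = (\<Sum>i\<in>J n. v i * indicator (cell n i) x)"

definition In2 :: "(nat \<Rightarrow> 'c set) \<Rightarrow> (nat \<Rightarrow> 'c \<Rightarrow> (real^'d) set) \<Rightarrow> nat \<Rightarrow> ('c \<Rightarrow> 'c \<Rightarrow> real) \<Rightarrow> real^'d \<Rightarrow> real^'d \<Rightarrow> real" where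
  "In2 J cell n K x y = (\<Sum>i\<in>J n. \<Sum>j\<in>J n. K i j * indicator (cell n i) x * indicator (cell n j) y)"

definition Lp_mem :: "ereal \<Rightarrow> (real^'d \<Rightarrow> real) \<Rightarrow> bool" where
  "Lp_mem r f \<longleftrightarrow> f \<in> borel_measurable (lebesgue_on Omega) \<and>
     (if r = \<infinity> then esssup (lebesgue_on Omega) (\<lambda>x. ereal \<bar>f x\<bar>) < \<infinity>
      else integrable (lebesgue_on Omega) (\<lambda>x. \<bar>f x\<bar> powr real_of_ereal r))"

definition Lp_norm :: "ereal \<Rightarrow> (real^'d \<Rightarrow> real) \<Rightarrow> real" where
  "Lp_norm r f = (if r = \<infinity> then real_of_ereal (esssup (lebesgue_on Omega) (\<lambda>x. ereal \<bar>f x\<bar>))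
      else (\<integral>x. \<bar>f x\<bar> powr real_of_ereal r \<partial>lebesgue_on Omega) powr (1 / real_of_ereal r))"

definition L1Lp_mem :: "real \<Rightarrow> ereal \<Rightarrow> (real^'d \<Rightarrow> real \<Rightarrow> real) \<Rightarrow> bool" where
  "L1Lp_mem T r F \<longleftrightarrow> (\<lambda>z. F (fst z) (snd z)) \<in> borel_measurable borel \<and>
     (\<forall>t\<in>{0..T}. Lp_mem r (\<lambda>x. F x t)) \<and>
     integrable (lebesgue_on {0..T}) (\<lambda>t. Lp_norm r (\<lambda>x. F x t))"

definition L1Lp_norm :: "real \<Rightarrow> ereal \<Rightarrow> (real^'d \<Rightarrow> real \<Rightarrow> real) \<Rightarrow> real" where
  "L1Lp_norm T r F = (\<integral>t. Lp_norm r (\<lambda>x. F x t) \<partial>lebesgue_on {0..T})"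

text \<open>Time interpolant: value w k on ]t_{k-1}, t_k], and w 0 at t \<le> t_0 = 0.\<close>
definition time_interp :: "(nat \<Rightarrow> real) \<Rightarrow> (nat \<Rightarrow> 'a) \<Rightarrow> real \<Rightarrow> 'a" where
  "time_interp tt w t = w (LEAST k. t \<le> tt k)"

end

theory Submission
  imports Defs
begin


lemma cell_facts:
  fixes cell :: "nat \<Rightarrow> 'c \<Rightarrow> (real^'d) set"
  assumes part: "cell_partition J cell" and i: "i \<in> J n"
  shows "cell n i \<in> sets lebesgue" "cell n i \<subseteq> Omega"
    "measure lebesgue (cell n i) > 0" "emeasure lebesgue (cell n i) < \<infinity>"
    "cell n i \<noteq> {}"
proof -
  have hc: "hypercubic (cell n i)" using part i unfolding cell_partition_def by blast
  then obtain a r where r: "r > 0" and b1: "box a (a + r *\<^sub>R One) \<subseteq> cell n i"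
    and b2: "cell n i \<subseteq> cbox a (a + r *\<^sub>R One)" unfolding hypercubic_def by blast
  let ?B = "box a (a + r *\<^sub>R One)" and ?C = "cbox a (a + r *\<^sub>R One)"
  have "negligible (cell n i - ?B)"
    by (rule negligible_subset[OF negligible_frontier_interval]) (use b2 in blast)
  hence "cell n i - ?B \<in> sets lebesgue" by (rule negligible_imp_sets)
  moreover have "cell n i = ?B \<union> (cell n i - ?B)" using b1 by blast
  ultimately show cs: "cell n i \<in> sets lebesgue"
    by (metis sets.Un borel_open open_box sets_completionI_sets sets_lborel)
  show "cell n i \<subseteq> Omega" using part i unfolding cell_partition_def by blast
  have mB0: "measure lebesgue ?B = measure lborel ?B" by (rule measure_completion) simp
  have mB1: "measure lborel ?B = (\<Prod>b\<in>Basis. ((a + r *\<^sub>R One) - a) \<bullet> b)"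
    by (rule measure_lborel_box) (use r in \<open>simp add: inner_add_left\<close>)
  have mB: "measure lebesgue ?B = (\<Prod>b\<in>(Basis::(real^'d) set). r)"
    unfolding mB0 mB1 by (rule prod.cong) (auto simp: inner_diff_left)
  have "(\<Prod>b\<in>(Basis::(real^'d) set). r) > 0" using r by (simp add: prod_pos)
  moreover have "measure lebesgue ?B \<le> measure lebesgue (cell n i)"
    by (rule measure_mono_fmeasurable[OF b1]) (auto intro: fmeasurableI2[OF lmeasurable_cbox b2] cs)
  ultimately show "measure lebesgue (cell n i) > 0" using mB by linarith
  show "emeasure lebesgue (cell n i) < \<infinity>"
    using fmeasurableI2[OF lmeasurable_cbox b2 cs] unfolding fmeasurable_def by blast
  have "a + (r/2) *\<^sub>R One \<in> ?B" using r by (simp add: mem_box inner_add_left)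
  thus "cell n i \<noteq> {}" using b1 by blast
qed

lemma Omega_sets: "Omega \<in> sets lebesgue" unfolding Omega_def by simp

lemma Omega_ne: "(0::real^'d) \<in> Omega" unfolding Omega_def by (simp add: mem_box)

lemma J_props:
  fixes cell :: "nat \<Rightarrow> 'c \<Rightarrow> (real^'d) set"
  assumes part: "cell_partition J cell"
  shows "finite (J n)" "J n \<noteq> {}" "(\<Union>i\<in>J n. cell n i) = Omega"
    "\<And>i j. i \<in> J n \<Longrightarrow> j \<in> J n \<Longrightarrow> x \<in> cell n i \<Longrightarrow> x \<in> cell n j \<Longrightarrow> i = j"
proof -
  note C = part[unfolded cell_partition_def, THEN spec, of n]
  note P = C[THEN conjunct1] C[THEN conjunct2, THEN conjunct2, THEN conjunct2]
     C[THEN conjunct2, THEN conjunct2, THEN conjunct1]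
  show "finite (J n)" "(\<Union>i\<in>J n. cell n i) = Omega" using P by (simp_all only:)
  show "J n \<noteq> {}"
  proof
    assume "J n = {}"
    hence "Omega = ({}::(real^'d) set)" using P(2) by simp
    thus False using Omega_ne[where 'd='d] by simp
  qed
  show "\<And>i j. i \<in> J n \<Longrightarrow> j \<in> J n \<Longrightarrow> x \<in> cell n i \<Longrightarrow> x \<in> cell n j \<Longrightarrow> i = j"
    using P(3) by blast
qed

lemma In_at:
  fixes cell :: "nat \<Rightarrow> 'c \<Rightarrow> (real^'d) set"
  assumes part: "cell_partition J cell" and i: "i \<in> J n" and x: "x \<in> cell n i"
  shows "In J cell n v x = v i"
proof -
  have "In J cell n v x = (\<Sum>j\<in>J n. if j = i then v i else 0)"
    unfolding In_def
  proof (rule sum.cong)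
    fix j assume j: "j \<in> J n"
    show "v j * indicator (cell n j) x = (if j = i then v i else 0)"
    proof (cases "j = i")
      case False
      hence "x \<notin> cell n j" using J_props(4)[OF part j i _ x] by blast
      thus ?thesis using False by simp
    qed (use x in simp)
  qed simp
  also have "\<dots> = v i" using i J_props(1)[OF part] by simp
  finally show ?thesis .
qed

lemma In_out:
  fixes cell :: "nat \<Rightarrow> 'c \<Rightarrow> (real^'d) set"
  assumes part: "cell_partition J cell" and x: "x \<notin> Omega"
  shows "In J cell n v x = 0"
  unfolding In_def
proof (rule sum.neutral, intro ballI)
  fix i assume "i \<in> J n"
  hence "x \<notin> cell n i" using J_props(3)[OF part, of n] x by blast
  thus "v i * indicator (cell n i) x = 0" by simp
qed

lemma In_cases:
  fixes cell :: "nat \<Rightarrow> 'c \<Rightarrow> (real^'d) set"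
  assumes part: "cell_partition J cell"
  obtains i where "i \<in> J n" "x \<in> cell n i" "\<And>v. In J cell n v x = v i"
  | "x \<notin> Omega" "\<And>v. In J cell n v x = 0"
proof (cases "x \<in> Omega")
  case True
  then obtain i where "i \<in> J n" "x \<in> cell n i" using J_props(3)[OF part, of n] by blast
  thus ?thesis using that(1) In_at[OF part] by blast
next
  case False
  thus ?thesis using that(2) In_out[OF part] by blast
qed

lemma In_comp:
  fixes cell :: "nat \<Rightarrow> 'c \<Rightarrow> (real^'d) set"
  assumes part: "cell_partition J cell" and F: "F 0 = 0"
  shows "F (In J cell n v x) = In J cell n (\<lambda>i. F (v i)) x"
  by (cases rule: In_cases[OF part, of n x]) (auto simp: F)

lemma In_meas:
  fixes cell :: "nat \<Rightarrow> 'c \<Rightarrow> (real^'d) set"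
  assumes part: "cell_partition J cell"
  shows "In J cell n v \<in> borel_measurable lebesgue"
proof -
  have "(\<lambda>x. \<Sum>i\<in>J n. v i * indicator (cell n i) x) \<in> borel_measurable lebesgue"
    using cell_facts(1)[OF part] by (intro borel_measurable_sum borel_measurable_times) auto
  thus ?thesis unfolding In_def[abs_def] .
qed

lemma In_meas_on:
  fixes cell :: "nat \<Rightarrow> 'c \<Rightarrow> (real^'d) set"
  assumes part: "cell_partition J cell"
  shows "In J cell n v \<in> borel_measurable (lebesgue_on Omega)"
  by (rule measurable_restrict_space1[OF In_meas[OF part]])

lemma In_integral:
  fixes cell :: "nat \<Rightarrow> 'c \<Rightarrow> (real^'d) set"
  assumes part: "cell_partition J cell"
  shows "integrable (lebesgue_on Omega) (In J cell n v)"
    "integral\<^sup>L (lebesgue_on Omega) (In J cell n v) = (\<Sum>i\<in>J n. hmeas cell n i * v i)"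
proof -
  have S: "cell n i \<in> sets (lebesgue_on Omega)" if "i \<in> J n" for i
    using cell_facts[OF part that] Omega_sets by (subst sets_restrict_space_iff) auto
  have E: "emeasure (lebesgue_on Omega) (cell n i) < \<infinity>" if "i \<in> J n" for i
    using cell_facts(2,4)[OF part that] Omega_sets by (subst emeasure_restrict_space) auto
  have M: "measure (lebesgue_on Omega) (cell n i) = hmeas cell n i" if "i \<in> J n" for i
    using cell_facts(2)[OF part that] Omega_sets unfolding hmeas_def by (subst measure_restrict_space) auto
  have eq: "In J cell n v = (\<lambda>x. \<Sum>i\<in>J n. v i * indicator (cell n i) x)"
    unfolding In_def[abs_def] ..
  show "integrable (lebesgue_on Omega) (In J cell n v)"
    unfolding eq using S E by (auto intro!: integrable_sum integrable_mult_right integrable_real_indicator)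
  have "integral\<^sup>L (lebesgue_on Omega) (In J cell n v) = (\<Sum>i\<in>J n. v i * integral\<^sup>L (lebesgue_on Omega) (indicator (cell n i)))"
    unfolding eq using S E by simp
  also have "\<dots> = (\<Sum>i\<in>J n. hmeas cell n i * v i)"
  proof (rule sum.cong)
    fix i assume i: "i \<in> J n"
    have "cell n i \<inter> space (lebesgue_on Omega) = cell n i"
      using sets.sets_into_space[OF S[OF i]] by blast
    thus "v i * integral\<^sup>L (lebesgue_on Omega) (indicator (cell n i)) = hmeas cell n i * v i"
      using M[OF i] by simp
  qed simp
  finally show "integral\<^sup>L (lebesgue_on Omega) (In J cell n v) = (\<Sum>i\<in>J n. hmeas cell n i * v i)" .
qed


lemma cell_on:
  fixes cell :: "nat \<Rightarrow> 'c \<Rightarrow> (real^'d) set"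
  assumes part: "cell_partition J cell" and i: "i \<in> J n"
  shows "cell n i \<in> sets (lebesgue_on Omega)" "emeasure (lebesgue_on Omega) (cell n i) < \<infinity>"
    "measure (lebesgue_on Omega) (cell n i) = hmeas cell n i" "hmeas cell n i > 0"
    "emeasure (lebesgue_on Omega) (cell n i) \<noteq> 0"
proof -
  show S: "cell n i \<in> sets (lebesgue_on Omega)"
    using cell_facts[OF part i] Omega_sets by (subst sets_restrict_space_iff) auto
  show "emeasure (lebesgue_on Omega) (cell n i) < \<infinity>"
    using cell_facts(2,4)[OF part i] Omega_sets by (subst emeasure_restrict_space) auto
  show M: "measure (lebesgue_on Omega) (cell n i) = hmeas cell n i"
    using cell_facts(2)[OF part i] Omega_sets unfolding hmeas_def by (subst measure_restrict_space) auto
  show P: "hmeas cell n i > 0" using cell_facts(3)[OF part i] unfolding hmeas_def .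
  show "emeasure (lebesgue_on Omega) (cell n i) \<noteq> 0"
  proof
    assume "emeasure (lebesgue_on Omega) (cell n i) = 0"
    hence "measure (lebesgue_on Omega) (cell n i) = 0" by (simp add: measure_def)
    thus False using M P by simp
  qed
qed

lemma In_esssup:
  fixes cell :: "nat \<Rightarrow> 'c \<Rightarrow> (real^'d) set"
  assumes part: "cell_partition J cell"
  shows "esssup (lebesgue_on Omega) (\<lambda>x. ereal \<bar>In J cell n v x\<bar>) = ereal (Max ((\<lambda>i. \<bar>v i\<bar>) ` J n))"
proof -
  let ?m = "Max ((\<lambda>i. \<bar>v i\<bar>) ` J n)"
  let ?f = "\<lambda>x. ereal \<bar>In J cell n v x\<bar>"
  have fin: "finite (J n)" and ne: "J n \<noteq> {}" using J_props[OF part] by auto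
  have [measurable]: "In J cell n v \<in> borel_measurable (lebesgue_on Omega)" by (rule In_meas_on[OF part])
  have fm: "?f \<in> borel_measurable (lebesgue_on Omega)" by measurable
  obtain i0 where i0: "i0 \<in> J n" using ne by blast
  have m0: "0 \<le> ?m" using fin i0 by (meson Max_ge abs_ge_zero finite_imageI image_eqI order_trans)
  have "esssup (lebesgue_on Omega) ?f \<le> ereal ?m"
  proof (rule esssup_I[OF fm], rule AE_I2)
    fix x
    show "?f x \<le> ereal ?m"
    proof (cases rule: In_cases[OF part, of n x])
      case (1 i)
      thus ?thesis using fin by simp
    next
      case 2
      thus ?thesis using m0 by simp
    qed
  qed
  moreover have "ereal ?m \<le> esssup (lebesgue_on Omega) ?f"
  proof (rule ccontr)
    assume "\<not> ereal ?m \<le> esssup (lebesgue_on Omega) ?f"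
    hence lt: "esssup (lebesgue_on Omega) ?f < ereal ?m" by simp
    have "?m \<in> (\<lambda>i. \<bar>v i\<bar>) ` J n" using Max_in[of "(\<lambda>i. \<bar>v i\<bar>) ` J n"] fin ne by blast
    then obtain i where i: "i \<in> J n" "\<bar>v i\<bar> = ?m" by (metis (no_types, lifting) imageE)
    from esssup_AE[of ?f "lebesgue_on Omega"] obtain N where
      N: "{x \<in> space (lebesgue_on Omega). \<not> ?f x \<le> esssup (lebesgue_on Omega) ?f} \<subseteq> N"
         "emeasure (lebesgue_on Omega) N = 0" "N \<in> sets (lebesgue_on Omega)"
      by (auto elim!: AE_E)
    have "cell n i \<subseteq> N"
    proof
      fix x assume x: "x \<in> cell n i"
      have "x \<in> space (lebesgue_on Omega)" using cell_facts(2)[OF part i(1)] x by auto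
      moreover have "?f x = ereal ?m" using In_at[OF part i(1) x] i(2) by simp
      ultimately show "x \<in> N" using N(1) lt by auto
    qed
    hence "emeasure (lebesgue_on Omega) (cell n i) \<le> emeasure (lebesgue_on Omega) N"
      by (rule emeasure_mono) (rule N(3))
    thus False using N(2) cell_on(5)[OF part i(1)] by simp
  qed
  ultimately show ?thesis by (rule antisym)
qed

definition dnorm :: "(nat \<Rightarrow> 'c set) \<Rightarrow> (nat \<Rightarrow> 'c \<Rightarrow> (real^'d) set) \<Rightarrow> nat \<Rightarrow> ereal \<Rightarrow> ('c \<Rightarrow> real) \<Rightarrow> real" where
  "dnorm J cell n q v = (if q = \<infinity> then Max ((\<lambda>i. \<bar>v i\<bar>) ` J n)
     else (\<Sum>i\<in>J n. hmeas cell n i * \<bar>v i\<bar> powr real_of_ereal q) powr (1 / real_of_ereal q))"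

lemma In_powr:
  fixes cell :: "nat \<Rightarrow> 'c \<Rightarrow> (real^'d) set"
  assumes part: "cell_partition J cell"
  shows "integrable (lebesgue_on Omega) (\<lambda>x. \<bar>In J cell n v x\<bar> powr r)"
    "(\<integral>x. \<bar>In J cell n v x\<bar> powr r \<partial>lebesgue_on Omega) = (\<Sum>i\<in>J n. hmeas cell n i * \<bar>v i\<bar> powr r)"
proof -
  have eq: "(\<lambda>x. \<bar>In J cell n v x\<bar> powr r) = In J cell n (\<lambda>i. \<bar>v i\<bar> powr r)"
    by (rule ext, rule In_comp[OF part, where F="\<lambda>s. \<bar>s\<bar> powr r"]) simp
  show "integrable (lebesgue_on Omega) (\<lambda>x. \<bar>In J cell n v x\<bar> powr r)"
    unfolding eq by (rule In_integral(1)[OF part])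
  show "(\<integral>x. \<bar>In J cell n v x\<bar> powr r \<partial>lebesgue_on Omega) = (\<Sum>i\<in>J n. hmeas cell n i * \<bar>v i\<bar> powr r)"
    unfolding eq by (rule In_integral(2)[OF part])
qed

lemma In_Lp_mem:
  fixes cell :: "nat \<Rightarrow> 'c \<Rightarrow> (real^'d) set"
  assumes part: "cell_partition J cell"
  shows "Lp_mem r (In J cell n v)"
  unfolding Lp_mem_def using In_meas_on[OF part] In_powr(1)[OF part] In_esssup[OF part]
  by (simp add: if_split)

lemma In_Lp_norm:
  fixes cell :: "nat \<Rightarrow> 'c \<Rightarrow> (real^'d) set"
  assumes part: "cell_partition J cell"
  shows "Lp_norm q (In J cell n v) = dnorm J cell n q v"
  unfolding Lp_norm_def dnorm_def using In_powr(2)[OF part] In_esssup[OF part] by simp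



lemma Psi_nonneg: "0 \<le> s \<Longrightarrow> 0 \<le> Psi p s" unfolding Psi_def by simp
lemma Psi_nonpos: "s \<le> 0 \<Longrightarrow> Psi p s \<le> 0" unfolding Psi_def by (simp add: mult_nonneg_nonpos)
lemma Psi_odd: "Psi p (- s) = - Psi p s" unfolding Psi_def by simp

definition phi :: "real \<Rightarrow> real \<Rightarrow> real" where
  "phi r s = (if 0 \<le> s then s powr (r - 1) else - ((- s) powr (r - 1)))"

lemma phi_mono: "1 \<le> r \<Longrightarrow> x \<le> y \<Longrightarrow> phi r x \<le> phi r y"
  unfolding phi_def by (auto intro: powr_mono2 order_trans[of _ 0])

lemma phi_mult: "1 \<le> r \<Longrightarrow> phi r s * s = \<bar>s\<bar> powr r"
proof -
  assume r: "1 \<le> r"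
  have *: "t powr (r - 1) * t = t powr r" if "0 \<le> t" for t :: real
  proof (cases "t = 0")
    case False
    have t1: "t powr 1 = t" using that by simp
    have "t powr (r - 1) * t powr 1 = t powr (r - 1 + 1)" by (simp only: powr_add)
    thus ?thesis unfolding t1 by simp
  qed (use r in simp)
  show ?thesis
    using *[of s] *[of "-s"] unfolding phi_def by (cases "0 \<le> s") auto
qed

lemma phi_abs: "\<bar>phi r s\<bar> = \<bar>s\<bar> powr (r - 1)"
  unfolding phi_def by auto

lemma phi_Psi: "1 \<le> r \<Longrightarrow> (phi r x - phi r y) * Psi p (y - x) \<le> 0"
proof (cases "x \<le> y")
  case True
  assume r: "1 \<le> r"
  have "phi r x - phi r y \<le> 0" using phi_mono[OF r True] by simp
  moreover have "0 \<le> Psi p (y - x)" using True by (simp add: Psi_nonneg)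
  ultimately show ?thesis by (simp add: mult_nonpos_nonneg)
next
  case False
  assume r: "1 \<le> r"
  have "0 \<le> phi r x - phi r y" using phi_mono[OF r, of y x] False by simp
  moreover have "Psi p (y - x) \<le> 0" using False by (simp add: Psi_nonpos)
  ultimately show ?thesis by (simp add: mult_nonneg_nonpos)
qed

lemma double_sum_nonpos:
  fixes h :: "'c \<Rightarrow> real" and Kk :: "'c \<Rightarrow> 'c \<Rightarrow> real"
  assumes fin: "finite I" and h: "\<And>i. i \<in> I \<Longrightarrow> 0 \<le> h i"
    and Kn: "\<And>i j. i \<in> I \<Longrightarrow> j \<in> I \<Longrightarrow> 0 \<le> Kk i j"
    and Ks: "\<And>i j. i \<in> I \<Longrightarrow> j \<in> I \<Longrightarrow> Kk i j = Kk j i"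
    and r: "1 \<le> r"
  shows "(\<Sum>i\<in>I. h i * phi r (v i) * (\<Sum>j\<in>I. h j * Kk i j * Psi p (v j - v i))) \<le> 0"
proof -
  let ?T = "(\<Sum>i\<in>I. h i * phi r (v i) * (\<Sum>j\<in>I. h j * Kk i j * Psi p (v j - v i)))"
  have T1: "?T = (\<Sum>i\<in>I. \<Sum>j\<in>I. h i * h j * Kk i j * phi r (v i) * Psi p (v j - v i))"
    by (simp add: sum_distrib_left mult_ac)
  also have "\<dots> = (\<Sum>j\<in>I. \<Sum>i\<in>I. h i * h j * Kk i j * phi r (v i) * Psi p (v j - v i))"
    by (rule sum.swap)
  also have "\<dots> = (\<Sum>i\<in>I. \<Sum>j\<in>I. - (h i * h j * Kk i j * phi r (v j) * Psi p (v j - v i)))"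
  proof (rule sum.cong[OF refl], rule sum.cong[OF refl])
    fix i j assume "i \<in> I" "j \<in> I"
    have "Psi p (v i - v j) = - Psi p (v j - v i)" using Psi_odd[of p "v j - v i"] by simp
    thus "h j * h i * Kk j i * phi r (v j) * Psi p (v i - v j) = - (h i * h j * Kk i j * phi r (v j) * Psi p (v j - v i))"
      using Ks[OF \<open>i \<in> I\<close> \<open>j \<in> I\<close>] by (simp add: mult_ac)
  qed
  finally have T2: "?T = (\<Sum>i\<in>I. \<Sum>j\<in>I. - (h i * h j * Kk i j * phi r (v j) * Psi p (v j - v i)))" .
  have "2 * ?T = (\<Sum>i\<in>I. \<Sum>j\<in>I. (h i * h j * Kk i j) * ((phi r (v i) - phi r (v j)) * Psi p (v j - v i)))"
    unfolding mult_2 apply (subst (1) T1) apply (subst T2)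
    by (simp add: sum.distrib[symmetric] algebra_simps)
  also have "\<dots> \<le> 0"
    by (intro sum_nonpos mult_nonneg_nonpos mult_nonneg_nonneg h Kn phi_Psi r) auto
  finally show ?thesis by simp
qed


lemma holder_zero:
  fixes h x y :: "'c \<Rightarrow> real"
  assumes fin: "finite I" and h: "\<And>i. i \<in> I \<Longrightarrow> 0 \<le> h i"
    and x: "\<And>i. i \<in> I \<Longrightarrow> 0 \<le> x i" and y: "\<And>i. i \<in> I \<Longrightarrow> 0 \<le> y i"
    and r: "1 < r" and X: "(\<Sum>i\<in>I. h i * x i powr r) = 0 \<or> (\<Sum>i\<in>I. h i * y i powr r) = 0"
  shows "(\<Sum>i\<in>I. h i * x i powr (r - 1) * y i) = 0"
proof (rule sum.neutral, intro ballI)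
  fix i assume i: "i \<in> I"
  from X show "h i * x i powr (r - 1) * y i = 0"
  proof
    assume e: "(\<Sum>i\<in>I. h i * x i powr r) = 0"
    have nn: "\<And>j. j \<in> I \<Longrightarrow> 0 \<le> h j * x j powr r" using h by simp
    have "\<forall>j\<in>I. h j * x j powr r = 0" 
      by (rule sum_nonneg_eq_0_iff[OF fin, THEN iffD1]) (use nn e in auto)
    hence "h i * x i powr r = 0" using i by (rule bspec)
    hence "h i = 0 \<or> x i = 0" by simp
    thus ?thesis by (elim disjE) simp_all
  next
    assume e: "(\<Sum>i\<in>I. h i * y i powr r) = 0"
    have nn: "\<And>j. j \<in> I \<Longrightarrow> 0 \<le> h j * y j powr r" using h by simp
    have "\<forall>j\<in>I. h j * y j powr r = 0" 
      by (rule sum_nonneg_eq_0_iff[OF fin, THEN iffD1]) (use nn e in auto)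
    hence "h i * y i powr r = 0" using i by (rule bspec)
    hence "h i = 0 \<or> y i = 0" by simp
    thus ?thesis by (elim disjE) simp_all
  qed
qed

lemma holder:
  fixes h x y :: "'c \<Rightarrow> real"
  assumes fin: "finite I" and h: "\<And>i. i \<in> I \<Longrightarrow> 0 \<le> h i"
    and x: "\<And>i. i \<in> I \<Longrightarrow> 0 \<le> x i" and y: "\<And>i. i \<in> I \<Longrightarrow> 0 \<le> y i"
    and r: "1 < r"
  shows "(\<Sum>i\<in>I. h i * x i powr (r - 1) * y i)
     \<le> (\<Sum>i\<in>I. h i * x i powr r) powr ((r - 1) / r) * (\<Sum>i\<in>I. h i * y i powr r) powr (1 / r)"
proof -
  define X where "X = (\<Sum>i\<in>I. h i * x i powr r)"
  define Y where "Y = (\<Sum>i\<in>I. h i * y i powr r)"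
  have X0: "0 \<le> X" unfolding X_def using h by (intro sum_nonneg) auto
  have Y0: "0 \<le> Y" unfolding Y_def using h by (intro sum_nonneg) auto
  show ?thesis
  proof (cases "X = 0 \<or> Y = 0")
    case True
    have "(\<Sum>i\<in>I. h i * x i powr (r - 1) * y i) = 0"
      by (rule holder_zero[where I=I and h=h and x=x and y=y]) (use fin h x y r True X_def Y_def in auto)
    thus ?thesis unfolding X_def[symmetric] Y_def[symmetric] by simp
  next
    case False
    hence Xp: "0 < X" and Yp: "0 < Y" using X0 Y0 by auto
    define \<alpha> where "\<alpha> = X powr ((r - 1) / r)"
    define \<beta> where "\<beta> = Y powr (1 / r)"
    have ap: "0 < \<alpha>" and bp: "0 < \<beta>" unfolding \<alpha>_def \<beta>_def using Xp Yp by auto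
    define p' where "p' = r / (r - 1)"
    have p'1: "1 < p'" unfolding p'_def using r by (simp add: field_simps)
    have conj: "1 / p' + 1 / r = 1" unfolding p'_def using r by (simp add: field_simps)
    have apow: "\<alpha> powr p' = X" unfolding \<alpha>_def p'_def using Xp r by (simp add: powr_powr)
    have bpow: "\<beta> powr r = Y" unfolding \<beta>_def using Yp r by (simp add: powr_powr)
    have trm: "h i * x i powr (r - 1) * y i / (\<alpha> * \<beta>) \<le> (r - 1) / r * (h i * x i powr r / X) + 1 / r * (h i * y i powr r / Y)"
      if i: "i \<in> I" for i
    proof -
      have a0: "0 \<le> x i powr (r - 1) / \<alpha>" using ap by simp
      have b0: "0 \<le> y i / \<beta>" using bp y[OF i] by simp
      have Y1: "(x i powr (r - 1) / \<alpha>) * (y i / \<beta>) \<le> (x i powr (r - 1) / \<alpha>) powr p' / p' + (y i / \<beta>) powr r / r"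
        by (rule Youngs_inequality[OF p'1 _ conj a0 b0]) (use r in simp)
      have e1: "(x i powr (r - 1) / \<alpha>) powr p' = x i powr r / X"
        using x[OF i] ap r apow unfolding p'_def by (simp add: powr_divide powr_powr)
      have e2: "(y i / \<beta>) powr r = y i powr r / Y"
        using y[OF i] bp bpow by (simp add: powr_divide)
      have e3: "\<And>z. z / p' = (r - 1) / r * z" unfolding p'_def by simp
      have "(x i powr (r - 1) / \<alpha>) * (y i / \<beta>) \<le> (r - 1) / r * (x i powr r / X) + 1 / r * (y i powr r / Y)"
        using Y1 unfolding e1 e2 e3 by (simp add: mult_ac)
      hence "h i * ((x i powr (r - 1) / \<alpha>) * (y i / \<beta>)) \<le> h i * ((r - 1) / r * (x i powr r / X) + 1 / r * (y i powr r / Y))"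
        by (rule mult_left_mono) (rule h[OF i])
      thus ?thesis by (simp add: field_simps)
    qed
    have sx: "(\<Sum>i\<in>I. h i * x i powr r / X) = X / X"
      unfolding sum_divide_distrib[symmetric] X_def ..
    have sy: "(\<Sum>i\<in>I. h i * y i powr r / Y) = Y / Y"
      unfolding sum_divide_distrib[symmetric] Y_def ..
    have "(\<Sum>i\<in>I. h i * x i powr (r - 1) * y i) / (\<alpha> * \<beta>) = (\<Sum>i\<in>I. h i * x i powr (r - 1) * y i / (\<alpha> * \<beta>))"
      by (simp add: sum_divide_distrib)
    also have "\<dots> \<le> (\<Sum>i\<in>I. (r - 1) / r * (h i * x i powr r / X) + 1 / r * (h i * y i powr r / Y))"
      by (rule sum_mono) (rule trm)
    also have "\<dots> = (r - 1) / r * (\<Sum>i\<in>I. h i * x i powr r / X) + 1 / r * (\<Sum>i\<in>I. h i * y i powr r / Y)"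
      by (simp only: sum.distrib sum_distrib_left)
    also have "\<dots> = 1" using Xp Yp r unfolding sx sy by (simp add: field_simps)
    finally have "(\<Sum>i\<in>I. h i * x i powr (r - 1) * y i) \<le> \<alpha> * \<beta>"
      using ap bp by (simp add: divide_le_eq)
    thus ?thesis unfolding \<alpha>_def \<beta>_def X_def Y_def .
  qed
qed


lemma disc_Lr:
  fixes h a b v :: "'c \<Rightarrow> real" and Kk :: "'c \<Rightarrow> 'c \<Rightarrow> real"
  assumes fin: "finite I" and h: "\<And>i. i \<in> I \<Longrightarrow> 0 \<le> h i"
    and Kn: "\<And>i j. i \<in> I \<Longrightarrow> j \<in> I \<Longrightarrow> 0 \<le> Kk i j"
    and Ks: "\<And>i j. i \<in> I \<Longrightarrow> j \<in> I \<Longrightarrow> Kk i j = Kk j i"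
    and r: "1 \<le> r" and tau: "0 < tau"
    and eq: "\<And>i. i \<in> I \<Longrightarrow> v i = a i + tau * b i + tau * (\<Sum>j\<in>I. h j * Kk i j * Psi p (v j - v i))"
  shows "(\<Sum>i\<in>I. h i * \<bar>v i\<bar> powr r) powr (1 / r)
     \<le> (\<Sum>i\<in>I. h i * \<bar>a i\<bar> powr r) powr (1 / r) + tau * (\<Sum>i\<in>I. h i * \<bar>b i\<bar> powr r) powr (1 / r)"
proof -
  define P where "P = (\<Sum>i\<in>I. h i * \<bar>v i\<bar> powr r)"
  define A where "A = (\<Sum>i\<in>I. h i * \<bar>a i\<bar> powr r) powr (1 / r)"
  define B where "B = (\<Sum>i\<in>I. h i * \<bar>b i\<bar> powr r) powr (1 / r)"
  define S where "S = (\<lambda>i. \<Sum>j\<in>I. h j * Kk i j * Psi p (v j - v i))"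
  have P0: "0 \<le> P" unfolding P_def using h by (intro sum_nonneg) auto
  have A0: "0 \<le> A" and B0: "0 \<le> B" unfolding A_def B_def by auto
  have "P = (\<Sum>i\<in>I. h i * (phi r (v i) * v i))"
    unfolding P_def using phi_mult[OF r] by simp
  also have "\<dots> = (\<Sum>i\<in>I. h i * phi r (v i) * (a i + tau * b i)) + tau * (\<Sum>i\<in>I. h i * phi r (v i) * S i)"
    unfolding sum_distrib_left sum.distrib[symmetric]
    by (rule sum.cong[OF refl]) (subst eq, simp_all add: S_def algebra_simps)
  also have "tau * (\<Sum>i\<in>I. h i * phi r (v i) * S i) \<le> 0"
    using double_sum_nonpos[OF fin h Kn Ks r, where v=v and p=p] tau unfolding S_def
    by (simp add: mult_nonneg_nonpos)
  also have "(\<Sum>i\<in>I. h i * phi r (v i) * (a i + tau * b i))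
     \<le> (\<Sum>i\<in>I. h i * \<bar>v i\<bar> powr (r - 1) * (\<bar>a i\<bar> + tau * \<bar>b i\<bar>))"
  proof (rule sum_mono)
    fix i assume i: "i \<in> I"
    have "phi r (v i) * (a i + tau * b i) \<le> \<bar>phi r (v i)\<bar> * \<bar>a i + tau * b i\<bar>"
      by (metis abs_ge_self abs_mult)
    also have "\<dots> \<le> \<bar>v i\<bar> powr (r - 1) * (\<bar>a i\<bar> + tau * \<bar>b i\<bar>)"
      unfolding phi_abs using tau by (intro mult_left_mono) (auto intro: order_trans[OF abs_triangle_ineq] simp: abs_mult)
    finally show "h i * phi r (v i) * (a i + tau * b i) \<le> h i * \<bar>v i\<bar> powr (r - 1) * (\<bar>a i\<bar> + tau * \<bar>b i\<bar>)"
      using h[OF i] by (simp add: mult.assoc mult_left_mono)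
  qed
  also have "(\<Sum>i\<in>I. h i * \<bar>v i\<bar> powr (r - 1) * (\<bar>a i\<bar> + tau * \<bar>b i\<bar>))
     = (\<Sum>i\<in>I. h i * \<bar>v i\<bar> powr (r - 1) * \<bar>a i\<bar>) + tau * (\<Sum>i\<in>I. h i * \<bar>v i\<bar> powr (r - 1) * \<bar>b i\<bar>)"
    by (simp add: sum.distrib sum_distrib_left algebra_simps)
  finally have main: "P \<le> (\<Sum>i\<in>I. h i * \<bar>v i\<bar> powr (r - 1) * \<bar>a i\<bar>) + tau * (\<Sum>i\<in>I. h i * \<bar>v i\<bar> powr (r - 1) * \<bar>b i\<bar>)"
    by simp
  show ?thesis
  proof (cases "r = 1")
    case True
    have le1: "\<And>i c. i \<in> I \<Longrightarrow> 0 \<le> c \<Longrightarrow> h i * \<bar>v i\<bar> powr (r - 1) * c \<le> h i * c"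
    proof -
      fix i and c :: real assume i: "i \<in> I" and c: "0 \<le> c"
      have "\<bar>v i\<bar> powr (r - 1) \<le> 1" using True by simp
      hence "\<bar>v i\<bar> powr (r - 1) * c \<le> c" using c by (simp add: mult_left_le_one_le)
      thus "h i * \<bar>v i\<bar> powr (r - 1) * c \<le> h i * c" using h[OF i] by (simp add: mult.assoc mult_left_mono)
    qed
    have "P \<le> (\<Sum>i\<in>I. h i * \<bar>a i\<bar>) + tau * (\<Sum>i\<in>I. h i * \<bar>b i\<bar>)"
    proof -
      have s1: "(\<Sum>i\<in>I. h i * \<bar>v i\<bar> powr (r - 1) * \<bar>a i\<bar>) \<le> (\<Sum>i\<in>I. h i * \<bar>a i\<bar>)"
        by (rule sum_mono) (rule le1, assumption, simp)
      have s2: "(\<Sum>i\<in>I. h i * \<bar>v i\<bar> powr (r - 1) * \<bar>b i\<bar>) \<le> (\<Sum>i\<in>I. h i * \<bar>b i\<bar>)"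
        by (rule sum_mono) (rule le1, assumption, simp)
      have "tau * (\<Sum>i\<in>I. h i * \<bar>v i\<bar> powr (r - 1) * \<bar>b i\<bar>) \<le> tau * (\<Sum>i\<in>I. h i * \<bar>b i\<bar>)"
        by (rule mult_left_mono[OF s2 less_imp_le[OF tau]])
      thus ?thesis using main s1 by linarith
    qed
    moreover have "(\<Sum>i\<in>I. h i * \<bar>a i\<bar>) \<ge> 0" "(\<Sum>i\<in>I. h i * \<bar>b i\<bar>) \<ge> 0"
      using h by (auto intro: sum_nonneg)
    ultimately show ?thesis using P0 True unfolding P_def by simp
  next
    case False
    hence r1: "1 < r" using r by simp
    have H1: "(\<Sum>i\<in>I. h i * \<bar>v i\<bar> powr (r - 1) * \<bar>a i\<bar>) \<le> P powr ((r - 1) / r) * A"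
      unfolding P_def A_def by (rule holder) (use fin h r1 in auto)
    have H2: "(\<Sum>i\<in>I. h i * \<bar>v i\<bar> powr (r - 1) * \<bar>b i\<bar>) \<le> P powr ((r - 1) / r) * B"
      unfolding P_def B_def by (rule holder) (use fin h r1 in auto)
    have PP: "P \<le> P powr ((r - 1) / r) * (A + tau * B)"
      using main H1 mult_left_mono[OF H2 less_imp_le[OF tau]] by (simp add: algebra_simps)
    show ?thesis
    proof (cases "P = 0")
      case True
      thus ?thesis using A0 B0 tau unfolding P_def[symmetric] A_def[symmetric] B_def[symmetric] by simp
    next
      case False
      hence Pp: "0 < P" using P0 by simp
      have split: "P = P powr (1 / r) * P powr ((r - 1) / r)"
      proof -
        have "P powr (1 / r) * P powr ((r - 1) / r) = P powr (1 / r + (r - 1) / r)" by (simp add: powr_add)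
        also have "1 / r + (r - 1) / r = 1" using r1 by (simp add: field_simps)
        finally show ?thesis using Pp by simp
      qed
      have "P powr (1 / r) * P powr ((r - 1) / r) \<le> (A + tau * B) * P powr ((r - 1) / r)"
        using PP split by (simp add: mult.commute)
      hence "P powr (1 / r) \<le> A + tau * B" using Pp by (simp add: mult_le_cancel_right)
      thus ?thesis unfolding P_def A_def B_def .
    qed
  qed
qed

lemma disc_max:
  fixes h a b v :: "'c \<Rightarrow> real" and Kk :: "'c \<Rightarrow> 'c \<Rightarrow> real"
  assumes fin: "finite I" and ne: "I \<noteq> {}" and h: "\<And>i. i \<in> I \<Longrightarrow> 0 \<le> h i"
    and Kn: "\<And>i j. i \<in> I \<Longrightarrow> j \<in> I \<Longrightarrow> 0 \<le> Kk i j"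
    and tau: "0 < tau"
    and eq: "\<And>i. i \<in> I \<Longrightarrow> v i = a i + tau * b i + tau * (\<Sum>j\<in>I. h j * Kk i j * Psi p (v j - v i))"
  shows "Max ((\<lambda>i. \<bar>v i\<bar>) ` I) \<le> Max ((\<lambda>i. \<bar>a i\<bar>) ` I) + tau * Max ((\<lambda>i. \<bar>b i\<bar>) ` I)"
proof -
  have "Max ((\<lambda>i. \<bar>v i\<bar>) ` I) \<in> (\<lambda>i. \<bar>v i\<bar>) ` I" using fin ne by (intro Max_in) auto
  then obtain i where i: "i \<in> I" and mi: "Max ((\<lambda>i. \<bar>v i\<bar>) ` I) = \<bar>v i\<bar>" by (metis (no_types, lifting) imageE)
  have vj: "\<bar>v j\<bar> \<le> \<bar>v i\<bar>" if "j \<in> I" for j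
    using that fin mi by (metis (no_types, lifting) Max_ge finite_imageI image_eqI)
  have am: "\<bar>a i\<bar> \<le> Max ((\<lambda>i. \<bar>a i\<bar>) ` I)" by (rule Max_ge[OF finite_imageI[OF fin] imageI[OF i]])
  have bm: "\<bar>b i\<bar> \<le> Max ((\<lambda>i. \<bar>b i\<bar>) ` I)" by (rule Max_ge[OF finite_imageI[OF fin] imageI[OF i]])
  have bnd: "\<bar>a i\<bar> + tau * \<bar>b i\<bar> \<le> Max ((\<lambda>i. \<bar>a i\<bar>) ` I) + tau * Max ((\<lambda>i. \<bar>b i\<bar>) ` I)"
    using am bm tau by (simp add: add_mono mult_left_mono)
  let ?S = "\<Sum>j\<in>I. h j * Kk i j * Psi p (v j - v i)"
  show ?thesis
  proof (cases "0 \<le> v i")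
    case True
    have "?S \<le> 0"
    proof (rule sum_nonpos)
      fix j assume j: "j \<in> I"
      have "v j - v i \<le> 0" using vj[OF j] True by linarith
      hence "Psi p (v j - v i) \<le> 0" by (rule Psi_nonpos)
      thus "h j * Kk i j * Psi p (v j - v i) \<le> 0" using h[OF j] Kn[OF i j] by (simp add: mult_nonneg_nonpos)
    qed
    hence "tau * ?S \<le> 0" by (rule mult_nonneg_nonpos[OF less_imp_le[OF tau]])
    hence "v i \<le> a i + tau * b i" using eq[OF i] by linarith
    moreover have "tau * b i \<le> tau * \<bar>b i\<bar>" by (rule mult_left_mono[OF abs_ge_self less_imp_le[OF tau]])
    hence "a i + tau * b i \<le> \<bar>a i\<bar> + tau * \<bar>b i\<bar>" by linarith
    ultimately show ?thesis using mi True bnd by simp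
  next
    case False
    have "?S \<ge> 0"
    proof (rule sum_nonneg)
      fix j assume j: "j \<in> I"
      have "v j - v i \<ge> 0" using vj[OF j] False by linarith
      hence "Psi p (v j - v i) \<ge> 0" by (rule Psi_nonneg)
      thus "h j * Kk i j * Psi p (v j - v i) \<ge> 0" using h[OF j] Kn[OF i j] by simp
    qed
    hence "tau * ?S \<ge> 0" by (rule mult_nonneg_nonneg[OF less_imp_le[OF tau]])
    hence "- v i \<le> - a i - tau * b i" using eq[OF i] by linarith
    moreover have "tau * (- b i) \<le> tau * \<bar>b i\<bar>" by (rule mult_left_mono[OF abs_ge_minus_self less_imp_le[OF tau]])
    hence "- a i - tau * b i \<le> \<bar>a i\<bar> + tau * \<bar>b i\<bar>" by linarith
    ultimately show ?thesis using mi False bnd by simp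
  qed
qed



lemma tt_mono:
  fixes tt :: "nat \<Rightarrow> real"
  assumes timemono: "\<And>k. k < N \<Longrightarrow> tt k < tt (Suc k)"
  shows "j \<le> k \<Longrightarrow> k \<le> N \<Longrightarrow> tt j \<le> tt k"
proof (induction k)
  case 0
  thus ?case by simp
next
  case (Suc k)
  show ?case
  proof (cases "j = Suc k")
    case False
    hence "tt j \<le> tt k" using Suc by simp
    also have "tt k < tt (Suc k)" using timemono Suc.prems by simp
    finally show ?thesis by simp
  qed simp
qed

lemma Least_interval:
  fixes tt :: "nat \<Rightarrow> real"
  assumes timemono: "\<And>k. k < N \<Longrightarrow> tt k < tt (Suc k)"
    and k: "k \<in> {1..N}" and t: "tt (k - 1) < t" "t \<le> tt k"
  shows "(LEAST k. t \<le> tt k) = k"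
proof (rule Least_equality)
  show "t \<le> tt k" by (rule t(2))
  fix y assume y: "t \<le> tt y"
  show "k \<le> y"
  proof (rule ccontr)
    assume "\<not> k \<le> y"
    hence "y \<le> k - 1" by simp
    moreover have "k - 1 \<le> N" using k by auto
    ultimately have "tt y \<le> tt (k - 1)" using tt_mono[where tt=tt and N=N] timemono by blast
    thus False using y t(1) by simp
  qed
qed

lemma Least_le_N:
  fixes tt :: "nat \<Rightarrow> real"
  assumes "tt N = T" and "t \<le> T"
  shows "(LEAST k. t \<le> tt k) \<le> N"
  by (rule Least_le) (use assms in simp)

lemma step_integral:
  fixes tt :: "nat \<Rightarrow> real" and c :: "nat \<Rightarrow> real"
  assumes time0: "tt 0 = 0" and timeN: "tt N = T"
    and timemono: "\<And>k. k < N \<Longrightarrow> tt k < tt (Suc k)"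
  shows "integrable (lebesgue_on {0..T}) (\<lambda>t. c (LEAST k. t \<le> tt k))"
    "(\<integral>t. c (LEAST k. t \<le> tt k) \<partial>lebesgue_on {0..T}) = (\<Sum>k\<in>{1..N}. c k * (tt k - tt (k - 1)))"
proof -
  let ?M = "lebesgue_on {0..T}"
  define G where "G = (\<lambda>t. c 0 * indicator {0} t + (\<Sum>k\<in>{1..N}. c k * indicator {tt (k - 1)<..tt k} t))"
  have mono: "\<And>j k. j \<le> k \<Longrightarrow> k \<le> N \<Longrightarrow> tt j \<le> tt k" using tt_mono[where tt=tt and N=N, OF timemono] by blast
  have T0: "0 \<le> T" using mono[of 0 N] time0 timeN by simp
  have sub: "{tt (k - 1)<..tt k} \<subseteq> {0..T}" if "k \<in> {1..N}" for k
  proof -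
    have "k - 1 \<le> N" using that by auto
    hence "0 \<le> tt (k - 1)" using mono[of 0 "k - 1"] time0 by simp
    moreover have "tt k \<le> T" using mono[of k N] that timeN by simp
    ultimately show ?thesis by auto
  qed
  have Ssp: "{0..T} \<inter> space lebesgue \<in> sets lebesgue" by simp
  have S: "{tt (k - 1)<..tt k} \<in> sets ?M" if "k \<in> {1..N}" for k
    using sub[OF that] by (subst sets_restrict_space_iff) auto
  have E: "emeasure ?M {tt (k - 1)<..tt k} < \<infinity>" if "k \<in> {1..N}" for k
    using sub[OF that] mono[of "k - 1" k] that by (subst emeasure_restrict_space) auto
  have Me: "measure ?M {tt (k - 1)<..tt k} = tt k - tt (k - 1)" if "k \<in> {1..N}" for k
    using sub[OF that] mono[of "k - 1" k] that by (subst measure_restrict_space) auto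
  have S0: "{0} \<in> sets ?M" using T0 by (subst sets_restrict_space_iff) auto
  have E0: "emeasure ?M {0} < \<infinity>" using T0 by (subst emeasure_restrict_space) auto
  have M0: "measure ?M {0} = 0" using T0 by (subst measure_restrict_space) auto
  have eq: "c (LEAST k. t \<le> tt k) = G t" if t: "t \<in> {0..T}" for t
  proof (cases "t = 0")
    case True
    have L: "(LEAST k. t \<le> tt k) = 0" using True time0 by (intro Least_equality) auto
    have "(\<Sum>k\<in>{1..N}. c k * indicator {tt (k - 1)<..tt k} t) = 0"
    proof (rule sum.neutral, intro ballI)
      fix k assume k: "k \<in> {1..N}"
      have "k - 1 \<le> N" using k by auto
      hence "0 \<le> tt (k - 1)" using mono[of 0 "k - 1"] time0 by simp
      thus "c k * indicator {tt (k - 1)<..tt k} t = 0" using True by simp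
    qed
    thus ?thesis unfolding G_def L using True by simp
  next
    case False
    hence tp: "0 < t" using t by simp
    define k where "k = (LEAST k. t \<le> tt k)"
    have kN: "k \<le> N" unfolding k_def by (rule Least_le_N[where tt=tt and N=N and T=T, OF timeN]) (use t in simp)
    have tk: "t \<le> tt k" unfolding k_def by (rule LeastI[of _ N]) (use t timeN in simp)
    have k1: "k \<ge> 1" using tk tp time0 by (cases k) auto
    have tk1: "tt (k - 1) < t"
    proof -
      have "\<not> t \<le> tt (k - 1)" unfolding k_def by (rule not_less_Least) (use k1 in \<open>simp add: k_def\<close>)
      thus ?thesis by simp
    qed
    have "(\<Sum>j\<in>{1..N}. c j * indicator {tt (j - 1)<..tt j} t) = (\<Sum>j\<in>{1..N}. if j = k then c k else 0)"
    proof (rule sum.cong[OF refl])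
      fix j assume j: "j \<in> {1..N}"
      show "c j * indicator {tt (j - 1)<..tt j} t = (if j = k then c k else 0)"
      proof (cases "t \<in> {tt (j - 1)<..tt j}")
        case True
        hence "(LEAST k. t \<le> tt k) = j" using Least_interval[where tt=tt and N=N, OF timemono j] by simp
        hence "j = k" unfolding k_def by simp
        thus ?thesis using True by simp
      next
        case False
        hence "j \<noteq> k" using tk tk1 by auto
        thus ?thesis using False by simp
      qed
    qed
    also have "\<dots> = c k" using k1 kN by simp
    finally show ?thesis unfolding G_def k_def[symmetric] using False by simp
  qed
  have i1: "integrable ?M (\<lambda>t. c 0 * indicator {0} t)"
    by (rule integrable_mult_right) (rule integrable_real_indicator[OF S0 E0])
  have i3: "integrable ?M (\<lambda>t. c k * indicator {tt (k - 1)<..tt k} t)" if k: "k \<in> {1..N}" for k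
    by (rule integrable_mult_right) (rule integrable_real_indicator[OF S[OF k] E[OF k]])
  have i2: "integrable ?M (\<lambda>t. \<Sum>k\<in>{1..N}. c k * indicator {tt (k - 1)<..tt k} t)"
    by (rule Bochner_Integration.integrable_sum) (rule i3)
  have intG: "integrable ?M G"
    unfolding G_def by (rule Bochner_Integration.integrable_add[OF i1 i2])
  show "integrable ?M (\<lambda>t. c (LEAST k. t \<le> tt k))"
    by (rule Bochner_Integration.integrable_cong[THEN iffD2, OF refl _ intG]) (use eq in simp)
  have "(\<integral>t. c (LEAST k. t \<le> tt k) \<partial>?M) = integral\<^sup>L ?M G"
    by (rule Bochner_Integration.integral_cong[OF refl]) (use eq in simp)
  also have "\<dots> = c 0 * measure ?M {0} + (\<Sum>k\<in>{1..N}. c k * measure ?M {tt (k - 1)<..tt k})"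
  proof -
    have "integral\<^sup>L ?M G = integral\<^sup>L ?M (\<lambda>t. c 0 * indicator {0} t)
        + integral\<^sup>L ?M (\<lambda>t. \<Sum>k\<in>{1..N}. c k * indicator {tt (k - 1)<..tt k} t)"
      unfolding G_def by (rule Bochner_Integration.integral_add[OF i1 i2])
    also have "integral\<^sup>L ?M (\<lambda>t. c 0 * indicator {0} t) = c 0 * measure ?M {0}"
      using T0 by (simp only: integral_mult_right_zero Bochner_Integration.integral_indicator) simp
    also have "integral\<^sup>L ?M (\<lambda>t. \<Sum>k\<in>{1..N}. c k * indicator {tt (k - 1)<..tt k} t)
        = (\<Sum>k\<in>{1..N}. integral\<^sup>L ?M (\<lambda>t. c k * indicator {tt (k - 1)<..tt k} t))"
      by (rule Bochner_Integration.integral_sum) (rule i3)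
    also have "\<dots> = (\<Sum>k\<in>{1..N}. c k * measure ?M {tt (k - 1)<..tt k})"
    proof (rule sum.cong[OF refl])
      fix k assume k: "k \<in> {1..N}"
      have "{tt (k - 1)<..tt k} \<inter> space ?M = {tt (k - 1)<..tt k}" using sub[OF k] by auto
      thus "integral\<^sup>L ?M (\<lambda>t. c k * indicator {tt (k - 1)<..tt k} t) = c k * measure ?M {tt (k - 1)<..tt k}"
        by (simp only: integral_mult_right_zero Bochner_Integration.integral_indicator)
    qed
    finally show ?thesis .
  qed
  also have "\<dots> = (\<Sum>k\<in>{1..N}. c k * (tt k - tt (k - 1)))"
    unfolding M0 using Me by simp
  finally show "(\<integral>t. c (LEAST k. t \<le> tt k) \<partial>?M) = (\<Sum>k\<in>{1..N}. c k * (tt k - tt (k - 1)))" .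
qed


lemma In2_at:
  fixes cell :: "nat \<Rightarrow> 'c \<Rightarrow> (real^'d) set"
  assumes part: "cell_partition J cell" and i: "i \<in> J n" and j: "j \<in> J n"
    and x: "x \<in> cell n i" and y: "y \<in> cell n j"
  shows "In2 J cell n Kk x y = Kk i j"
proof -
  have "In2 J cell n Kk x y = In J cell n (\<lambda>i'. In J cell n (Kk i') y) x"
    unfolding In2_def In_def by (simp add: sum_distrib_left mult_ac)
  also have "\<dots> = In J cell n (Kk i) y" by (rule In_at[OF part i x])
  also have "\<dots> = Kk i j" by (rule In_at[OF part j y])
  finally show ?thesis .
qed

lemma dnorm_nonneg:
  fixes cell :: "nat \<Rightarrow> 'c \<Rightarrow> (real^'d) set"
  assumes part: "cell_partition J cell"
  shows "0 \<le> dnorm J cell n q v"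
proof (cases "q = \<infinity>")
  case True
  obtain i where i: "i \<in> J n" using J_props(2)[OF part] by blast
  have "\<bar>v i\<bar> \<le> Max ((\<lambda>i. \<bar>v i\<bar>) ` J n)"
    by (rule Max_ge[OF finite_imageI[OF J_props(1)[OF part]] imageI[OF i]])
  thus ?thesis using True unfolding dnorm_def by (simp add: order_trans[OF abs_ge_zero])
next
  case False
  thus ?thesis unfolding dnorm_def by simp
qed

lemma dnorm_cong:
  assumes "\<And>i. i \<in> J n \<Longrightarrow> v i = w i"
  shows "dnorm J cell n q v = dnorm J cell n q w"
proof -
  have "(\<lambda>i. \<bar>v i\<bar>) ` J n = (\<lambda>i. \<bar>w i\<bar>) ` J n" using assms by (intro image_cong) auto
  moreover have "(\<Sum>i\<in>J n. hmeas cell n i * \<bar>v i\<bar> powr real_of_ereal q) = (\<Sum>i\<in>J n. hmeas cell n i * \<bar>w i\<bar> powr real_of_ereal q)"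
    using assms by (intro sum.cong) auto
  ultimately show ?thesis unfolding dnorm_def by simp
qed

lemma dnorm_step:
  fixes cell :: "nat \<Rightarrow> 'c \<Rightarrow> (real^'d) set" and Kk :: "'c \<Rightarrow> 'c \<Rightarrow> real"
  assumes part: "cell_partition J cell" and q: "1 \<le> q" and tau: "0 < tau"
    and Kn: "\<And>x y. In2 J cell n Kk x y \<ge> 0"
    and Ks: "\<And>x y. In2 J cell n Kk x y = In2 J cell n Kk y x"
    and sch: "\<And>i. i \<in> J n \<Longrightarrow> (v i - a i) / tau = (\<Sum>j\<in>J n. hmeas cell n j * Kk i j * Psi p (v j - v i)) + b i"
  shows "dnorm J cell n q v \<le> dnorm J cell n q a + tau * dnorm J cell n q b"
proof -
  have fin: "finite (J n)" and ne: "J n \<noteq> {}" using J_props[OF part] by auto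
  have h: "\<And>i. i \<in> J n \<Longrightarrow> 0 \<le> hmeas cell n i" using cell_on(4)[OF part] less_imp_le by blast
  have Kn': "0 \<le> Kk i j" if i: "i \<in> J n" and j: "j \<in> J n" for i j
  proof -
    obtain x where x: "x \<in> cell n i" using cell_facts(5)[OF part i] by blast
    obtain y where y: "y \<in> cell n j" using cell_facts(5)[OF part j] by blast
    show ?thesis using Kn[of x y] In2_at[OF part i j x y] by simp
  qed
  have Ks': "Kk i j = Kk j i" if i: "i \<in> J n" and j: "j \<in> J n" for i j
  proof -
    obtain x where x: "x \<in> cell n i" using cell_facts(5)[OF part i] by blast
    obtain y where y: "y \<in> cell n j" using cell_facts(5)[OF part j] by blast
    show ?thesis using Ks[of x y] In2_at[OF part i j x y, of Kk] In2_at[OF part j i y x, of Kk] by simp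
  qed
  have eq: "v i = a i + tau * b i + tau * (\<Sum>j\<in>J n. hmeas cell n j * Kk i j * Psi p (v j - v i))"
    if i: "i \<in> J n" for i
  proof -
    have "v i - a i = tau * ((\<Sum>j\<in>J n. hmeas cell n j * Kk i j * Psi p (v j - v i)) + b i)"
      using sch[OF i] tau by (simp add: field_simps)
    thus ?thesis by (simp add: algebra_simps)
  qed
  show ?thesis
  proof (cases "q = \<infinity>")
    case True
    thus ?thesis unfolding dnorm_def
      using disc_max[OF fin ne h Kn' tau eq] by simp
  next
    case False
    then obtain r where qr: "q = ereal r" using q by (cases q) auto
    have r: "1 \<le> r" using q qr by simp
    show ?thesis unfolding dnorm_def using False qr
      disc_Lr[OF fin h Kn' Ks' r tau eq] by simp
  qed
qed

theorem lemma6p13: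
  fixes p :: real and q :: ereal and T :: real and N :: nat and tt :: "nat \<Rightarrow> real"
    and J :: "nat \<Rightarrow> 'c set" and cell :: "nat \<Rightarrow> 'c \<Rightarrow> (real^'d) set"
    and K :: "nat \<Rightarrow> 'c \<Rightarrow> 'c \<Rightarrow> real" and g :: "nat \<Rightarrow> 'c \<Rightarrow> real"
    and f :: "nat \<Rightarrow> nat \<Rightarrow> 'c \<Rightarrow> real" and u :: "nat \<Rightarrow> nat \<Rightarrow> 'c \<Rightarrow> real"
  assumes p: "1 < p"
    and q: "1 \<le> q"
    and part: "cell_partition J cell"
    and time0: "tt 0 = 0" and timeN: "tt N = T"
    and timemono: "\<And>k. k < N \<Longrightarrow> tt k < tt (Suc k)"
    and scheme: "\<And>n k i. k \<in> {1..N} \<Longrightarrow> i \<in> J n \<Longrightarrow>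
        (u n k i - u n (k - 1) i) / (tt k - tt (k - 1))
          = (\<Sum>j\<in>J n. hmeas cell n j * K n i j * Psi p (u n k j - u n k i)) + f n k i"
    and init: "\<And>n i. i \<in> J n \<Longrightarrow> u n 0 i = g n i"
    and K_nonneg: "\<And>n x y. In2 J cell n (K n) x y \<ge> 0"
    and K_meas: "\<And>n. (\<lambda>z. In2 J cell n (K n) (fst z) (snd z)) \<in> borel_measurable borel"
    and K_sym: "\<And>n x y. In2 J cell n (K n) x y = In2 J cell n (K n) y x"
    and K_bdd: "\<And>n. \<exists>C::real. \<forall>x\<in>Omega.
        (\<integral>\<^sup>+ y. ennreal (In2 J cell n (K n) x y) \<partial>lebesgue_on Omega) \<le> ennreal C"
    and g_mem: "\<And>n. Lp_mem (max (ereal p) q) (In J cell n (g n))"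
    and g_bdd: "\<exists>C. \<forall>n. Lp_norm q (In J cell n (g n)) \<le> C"
    and f_mem: "\<And>n. L1Lp_mem T (max (ereal p) q)
        (\<lambda>x t. In J cell n (time_interp tt (f n) t) x)"
    and f_bdd: "\<exists>C. \<forall>n. L1Lp_norm T q (\<lambda>x t. In J cell n (time_interp tt (f n) t) x) \<le> C"
  shows "(\<forall>n. \<forall>t\<in>{0..T}. Lp_mem (max (ereal p) q) (\<lambda>x. In J cell n (time_interp tt (u n) t) x))
       \<and> (\<exists>C. \<forall>n. \<forall>t\<in>{0..T}. Lp_norm q (\<lambda>x. In J cell n (time_interp tt (u n) t) x) \<le> C)"
proof -
  have mem: "\<forall>n. \<forall>t\<in>{0..T}. Lp_mem (max (ereal p) q) (\<lambda>x. In J cell n (time_interp tt (u n) t) x)"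
    using In_Lp_mem[OF part] by blast
  obtain Cg where Cg: "\<And>n. Lp_norm q (In J cell n (g n)) \<le> Cg" using g_bdd by blast
  obtain Cf where Cf: "\<And>n. L1Lp_norm T q (\<lambda>x t. In J cell n (time_interp tt (f n) t) x) \<le> Cf"
    using f_bdd by blast
  have mono: "\<And>j k. j \<le> k \<Longrightarrow> k \<le> N \<Longrightarrow> tt j \<le> tt k"
    using tt_mono[where tt=tt and N=N] timemono by blast
  have bound: "Lp_norm q (\<lambda>x. In J cell n (time_interp tt (u n) t) x) \<le> Cg + Cf"
    if t: "t \<in> {0..T}" for n t
  proof -
    define c where "c = (\<lambda>j. dnorm J cell n q (f n j))"
    define D where "D = (\<lambda>k. (\<Sum>j\<in>{1..k}. c j * (tt j - tt (j - 1))))"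
    have step: "dnorm J cell n q (u n k) \<le> dnorm J cell n q (u n (k - 1)) + (tt k - tt (k - 1)) * c k"
      if k: "k \<in> {1..N}" for k
    proof -
      have "tt (k - 1) < tt (Suc (k - 1))" using timemono[of "k - 1"] k by auto
      hence tau: "0 < tt k - tt (k - 1)" using k by simp
      show ?thesis unfolding c_def
        by (rule dnorm_step[OF part q tau K_nonneg K_sym]) (rule scheme[OF k])
    qed
    have ind: "k \<le> N \<Longrightarrow> dnorm J cell n q (u n k) \<le> dnorm J cell n q (g n) + D k" for k
    proof (induction k)
      case 0
      have "dnorm J cell n q (u n 0) = dnorm J cell n q (g n)"
        by (rule dnorm_cong) (rule init)
      thus ?case unfolding D_def by simp
    next
      case (Suc k)
      have "dnorm J cell n q (u n (Suc k)) \<le> dnorm J cell n q (u n k) + (tt (Suc k) - tt k) * c (Suc k)"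
        using step[of "Suc k"] Suc.prems by simp
      also have "\<dots> \<le> dnorm J cell n q (g n) + D k + (tt (Suc k) - tt k) * c (Suc k)"
        using Suc.IH Suc.prems by simp
      also have "dnorm J cell n q (g n) + D k + (tt (Suc k) - tt k) * c (Suc k) = dnorm J cell n q (g n) + D (Suc k)"
        unfolding D_def by simp
      finally show ?case by simp
    qed
    have cnn: "0 \<le> c j" for j unfolding c_def by (rule dnorm_nonneg[OF part])
    have DN: "D k \<le> D N" if "k \<le> N" for k
      unfolding D_def
    proof (rule sum_mono2)
      show "finite {1..N}" by simp
      show "{1..k} \<subseteq> {1..N}" using that by auto
      fix j assume "j \<in> {1..N} - {1..k}"
      hence "tt (j - 1) \<le> tt j" using mono[of "j - 1" j] by auto
      thus "0 \<le> c j * (tt j - tt (j - 1))" using cnn[of j] by simp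
    qed
    have L1: "L1Lp_norm T q (\<lambda>x t. In J cell n (time_interp tt (f n) t) x) = D N"
    proof -
      have "L1Lp_norm T q (\<lambda>x t. In J cell n (time_interp tt (f n) t) x)
          = (\<integral>t. c (LEAST k. t \<le> tt k) \<partial>lebesgue_on {0..T})"
        unfolding L1Lp_norm_def time_interp_def c_def In_Lp_norm[OF part] ..
      also have "\<dots> = D N" unfolding D_def
        by (rule step_integral(2)[OF time0 timeN timemono])
      finally show ?thesis .
    qed
    define k where "k = (LEAST k. t \<le> tt k)"
    have kN: "k \<le> N" unfolding k_def by (rule Least_le) (use t timeN in simp)
    have "Lp_norm q (\<lambda>x. In J cell n (time_interp tt (u n) t) x) = dnorm J cell n q (u n k)"
      unfolding time_interp_def k_def In_Lp_norm[OF part] ..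
    also have "\<dots> \<le> dnorm J cell n q (g n) + D k" by (rule ind[OF kN])
    also have "\<dots> \<le> Cg + Cf"
      using Cg[of n] Cf[of n] DN[OF kN] unfolding L1 In_Lp_norm[OF part] by simp
    finally show ?thesis .
  qed
  show ?thesis using mem bound by blast
qed

end
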